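(* Fix integers $l\ge 2$ and $l'\ge 2$. Consider an attribute $A$ with concepts $c_1,\dots,c_l$ and an attribute $A'$ with concepts $c'_1,\dots,c'_{l'}$. For each dimension $d$, let $\{v_{i,j}: 1\le i\le l,\ 1\le j\le l'\}$ be independent random vectors with $v_{i,j}\sim N(\mathbf{0},I_d)$ (the representation of the composite concept $\{c_i,c'_j\}$). Define $$\hat v_i=\frac{1}{l'}\sum_{j=1}^{l'}v_{i,j},\qquad \hat v'_j=\frac{1}{l}\sum_{i=1}^{l}v_{i,j},\qquad \mu=\frac{1}{ll'}\sum_{i=1}^{l}\sum_{j=1}^{l'}v_{i,j},$$ and, for a positive scalar $\sigma>0$ (which may depend on $d$), the centered base-concept representations $$v_i=\frac{\hat v_i-\mu}{\sigma}\ (1\le i\le l),\qquad v'_j=\frac{\hat v'_j-\mu}{\sigma}\ (1\le j\le l').$$ Then: (1) Almost surely, there exist $i\neq i'$ in $\{1,\dots,l\}$ with $\langle v_i,v_{i'}\rangle\neq 0$, and there exist $j\neq j'$ in $\{1,\dots,l'\}$ with $\langle v'_j,v'_{j'}\rangle\neq 0$; i.e., within each attribute some pair of base-concept representations is non-orthogonal. (2) For every $i\in\{1,\dots,l\}$, $j\in\{1,\dots,l'\}$ and every $\epsilon>0$, $$\lim_{d\to\infty}\mathbb{P}\Big[v_i\neq 0,\ v'_j\neq 0,\ \Big|\frac{\langle v_i,v'_j\rangle}{\|v_i\|\,\|v'_j\|}\Big|\le\epsilon\Big]=1,$$ i.e., base-concept representations from different attributes are orthogonal with high probability as $d\to\i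nfty$.
   Context: $N(\mathbf{0},I_d)$ denotes the standard (spherical) Gaussian distribution on $\mathbb{R}^d$. $l$ and $l'$ are held fixed as $d\to\infty$. *)

theory Defs
  imports "HOL-Probability.Probability"
begin

text \<open>Vectors in R^d are represented as functions nat => real, only the
coordinates k < d being relevant.\<close>

definition ipd :: "nat \<Rightarrow> (nat \<Rightarrow> real) \<Rightarrow> (nat \<Rightarrow> real) \<Rightarrow> real" where
  "ipd d x y = (\<Sum>k<d. x k * y k)"

definition vnorm :: "nat \<Rightarrow> (nat \<Rightarrow> real) \<Rightarrow> real" where
  "vnorm d x = sqrt (ipd d x x)"

text \<open>Sample space for dimension d: the family of independent standard Gaussian
coordinates, omega (i,j,k) being coordinate k of v_{i,j} (0-based indices).\<close>

definition gauss_space :: "nat \<Rightarrow> nat \<Rightarrow> nat \<Rightarrow> (nat \<times> nat \<times> nat \<Rightarrow> real) measure" where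
  "gauss_space l l' d =
     PiM ({..<l} \<times> {..<l'} \<times> {..<d}) (\<lambda>_. density lborel std_normal_density)"

definition cvec :: "(nat \<times> nat \<times> nat \<Rightarrow> real) \<Rightarrow> nat \<Rightarrow> nat \<Rightarrow> nat \<Rightarrow> real" where
  "cvec \<omega> i j = (\<lambda>k. \<omega> (i, j, k))"

definition vhat :: "nat \<Rightarrow> (nat \<times> nat \<times> nat \<Rightarrow> real) \<Rightarrow> nat \<Rightarrow> nat \<Rightarrow> real" where
  "vhat l' \<omega> i = (\<lambda>k. (1 / real l') * (\<Sum>j<l'. cvec \<omega> i j k))"

definition vhat' :: "nat \<Rightarrow> (nat \<times> nat \<times> nat \<Rightarrow> real) \<Rightarrow> nat \<Rightarrow> nat \<Rightarrow> real" where
  "vhat' l \<omega> j = (\<lambda>k. (1 / real l) * (\<Sum>i<l. cvec \<omega> i j k))"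

definition vmean :: "nat \<Rightarrow> nat \<Rightarrow> (nat \<times> nat \<times> nat \<Rightarrow> real) \<Rightarrow> nat \<Rightarrow> real" where
  "vmean l l' \<omega> = (\<lambda>k. (1 / (real l * real l')) * (\<Sum>i<l. \<Sum>j<l'. cvec \<omega> i j k))"

definition base_v :: "nat \<Rightarrow> nat \<Rightarrow> real \<Rightarrow> (nat \<times> nat \<times> nat \<Rightarrow> real) \<Rightarrow> nat \<Rightarrow> nat \<Rightarrow> real" where
  "base_v l l' \<sigma> \<omega> i = (\<lambda>k. (vhat l' \<omega> i k - vmean l l' \<omega> k) / \<sigma>)"

definition base_v' :: "nat \<Rightarrow> nat \<Rightarrow> real \<Rightarrow> (nat \<times> nat \<times> nat \<Rightarrow> real) \<Rightarrow> nat \<Rightarrow> nat \<Rightarrow> real" where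
  "base_v' l l' \<sigma> \<omega> j = (\<lambda>k. (vhat' l \<omega> j k - vmean l l' \<omega> k) / \<sigma>)"

end

theory Submission
  imports Defs
begin
abbreviation NN :: "real measure" where "NN \<equiv> density lborel std_normal_density"

lemma NN_prob: "prob_space NN"
  by (rule prob_space_normal_density) simp

lemma NN_mom:
  fixes n :: nat
  assumes "has_bochner_integral lborel (\<lambda>x. std_normal_density x * x ^ n) v"
  shows "integrable NN (\<lambda>x. x ^ n)" "integral\<^sup>L NN (\<lambda>x. x ^ n) = v"
proof -
  have i: "integrable lborel (\<lambda>x. std_normal_density x * x ^ n)"
    using assms using assms by (metis has_bochner_integral_iff)
  have m1: "(\<lambda>x::real. x ^ n) \<in> borel_measurable lborel" by measurable
  have m2: "std_normal_density \<in> borel_measurable lborel" by measurable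
  have nn: "AE x in lborel. 0 \<le> std_normal_density x" by (simp add: normal_density_nonneg)
  show "integrable NN (\<lambda>x. x ^ n)"
    unfolding integrable_density[OF m1 m2 nn] scaleR_conv_of_real of_real_eq_id id_def using i .
  show "integral\<^sup>L NN (\<lambda>x. x ^ n) = v"
    unfolding integral_density[OF m1 m2 nn] scaleR_conv_of_real of_real_eq_id id_def
    using has_bochner_integral_integral_eq[OF assms] .
qed

lemma NN_m1: "integrable NN (\<lambda>x. x ^ 1)" "integral\<^sup>L NN (\<lambda>x. x ^ 1) = 0"
  using NN_mom[OF std_normal_moment_odd[of 0]] by auto

lemma NN_m2: "integrable NN (\<lambda>x. x ^ 2)" "integral\<^sup>L NN (\<lambda>x. x ^ 2) = 1"
  using NN_mom[OF std_normal_moment_even[of 1]] by auto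

lemma NN_m4: "integrable NN (\<lambda>x. x ^ 4)" "integral\<^sup>L NN (\<lambda>x. x ^ 4) = 3"
proof -
  have e: "fact (2 * 2) / (2 ^ 2 * fact 2) = (3::real)"
    by (simp add: fact_numeral)
  show "integrable NN (\<lambda>x. x ^ 4)" "integral\<^sup>L NN (\<lambda>x. x ^ 4) = 3"
    using NN_mom[OF std_normal_moment_even[of 2]] unfolding e by simp_all
qed

lemma NN_singleton: "emeasure NN {p} = 0"
proof -
  have "AE x in lborel. x \<notin> {p}" by (rule AE_not_in) auto
  then have A: "AE x in lborel. x \<in> {p} \<longrightarrow> std_normal_density x = 0"
    by eventually_elim auto
  have "{p} \<in> null_sets NN"
    by (subst null_sets_density_iff) (use A in auto)
  thus ?thesis by (rule null_setsD1)
qed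

lemma PP_prob: "prob_space (PiM I (\<lambda>_. NN))"
proof -
  interpret product_prob_space "\<lambda>_. NN" I
    by (simp add: product_prob_space_def product_prob_space_axioms_def product_sigma_finite_def
        NN_prob prob_space_imp_sigma_finite)
  show ?thesis by (rule P.prob_space_axioms)
qed

lemma PP_comp_distr: "x \<in> I \<Longrightarrow> distr (PiM I (\<lambda>_. NN)) NN (\<lambda>\<omega>. \<omega> x) = NN"
  by (rule distr_PiM_component) (auto simp: NN_prob)

lemma PP_comp:
  fixes f :: "real \<Rightarrow> real"
  assumes x: "x \<in> I" and f: "f \<in> borel_measurable borel" and i: "integrable NN f"
  shows "integrable (PiM I (\<lambda>_. NN)) (\<lambda>\<omega>. f (\<omega> x))"
        "integral\<^sup>L (PiM I (\<lambda>_. NN)) (\<lambda>\<omega>. f (\<omega> x)) = integral\<^sup>L NN f"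
proof -
  have m: "(\<lambda>\<omega>. \<omega> x) \<in> measurable (PiM I (\<lambda>_. NN)) NN"
    using x by (rule measurable_component_singleton)
  have f': "f \<in> borel_measurable NN" using f by simp
  show "integrable (PiM I (\<lambda>_. NN)) (\<lambda>\<omega>. f (\<omega> x))"
    using integrable_distr_eq[OF m f'] i PP_comp_distr[OF x] by simp
  show "integral\<^sup>L (PiM I (\<lambda>_. NN)) (\<lambda>\<omega>. f (\<omega> x)) = integral\<^sup>L NN f"
    using integral_distr[OF m f'] PP_comp_distr[OF x] by simp
qed

lemma PP_indep:
  fixes I :: "'i set"
  assumes "I \<noteq> {}"
  shows "prob_space.indep_vars (PiM I (\<lambda>_. NN)) (\<lambda>_. NN) (\<lambda>x \<omega>. \<omega> x) I"
proof -
  interpret P: prob_space "PiM I (\<lambda>_. NN)" by (rule PP_prob)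
  have rv: "(\<lambda>\<omega>. \<omega> i) \<in> measurable (PiM I (\<lambda>_. NN)) NN" for i :: 'i
  proof (cases "i \<in> I")
    case True
    show ?thesis using measurable_component_singleton[OF True, of "\<lambda>_. NN"] by simp
  next
    case False
    have "(\<lambda>\<omega>. \<omega> i) \<in> measurable (PiM I (\<lambda>_. NN)) NN \<longleftrightarrow>
          (\<lambda>\<omega>. undefined) \<in> measurable (PiM I (\<lambda>_. NN)) NN"
      by (rule measurable_cong) (use False in \<open>auto simp: space_PiM PiE_def extensional_def\<close>)
    then show ?thesis by simp
  qed
  show ?thesis
  proof (subst P.indep_vars_iff_distr_eq_PiM[OF assms])
    show "distr (PiM I (\<lambda>_. NN)) (PiM I (\<lambda>_. NN)) (\<lambda>x. \<lambda>i\<in>I. x i) =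
          PiM I (\<lambda>i. distr (PiM I (\<lambda>_. NN)) NN (\<lambda>\<omega>. \<omega> i))"
    proof -
      have "distr (PiM I (\<lambda>_. NN)) (PiM I (\<lambda>_. NN)) (\<lambda>x. \<lambda>i\<in>I. x i) =
            distr (PiM I (\<lambda>_. NN)) (PiM I (\<lambda>_. NN)) (\<lambda>x. x)"
        by (rule distr_cong) (auto simp: space_PiM PiE_def extensional_restrict)
      also have "\<dots> = PiM I (\<lambda>_. NN)" by (rule distr_id)
      also have "\<dots> = PiM I (\<lambda>i. distr (PiM I (\<lambda>_. NN)) NN (\<lambda>\<omega>. \<omega> i))"
        by (rule PiM_cong) (auto simp: PP_comp_distr)
      finally show ?thesis .
    qed
  qed (rule rv)
qed

lemma PP_coord_borel:
  assumes "x \<in> I"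
  shows "(\<lambda>\<omega>. \<omega> x) \<in> borel_measurable (PiM I (\<lambda>_. NN))"
proof -
  have "(\<lambda>\<omega>. \<omega> x) \<in> measurable (PiM I (\<lambda>_. NN)) NN"
    using measurable_component_singleton[OF assms, of "\<lambda>_. NN"] by simp
  moreover have "measurable (PiM I (\<lambda>_. NN)) NN = measurable (PiM I (\<lambda>_. NN)) borel"
    by (rule measurable_cong_sets) auto
  ultimately show ?thesis by simp
qed

lemma PP_block_indep:
  fixes I :: "'i set" and B :: "'k \<Rightarrow> 'i set"
  assumes "I \<noteq> {}" "\<And>k. k \<in> K \<Longrightarrow> B k \<subseteq> I" "disjoint_family_on B K"
    "\<And>k. k \<in> K \<Longrightarrow> G k \<in> borel_measurable (PiM (B k) (\<lambda>_. NN))"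
  shows "prob_space.indep_vars (PiM I (\<lambda>_. NN)) (\<lambda>_. borel) (\<lambda>k \<omega>. G k (restrict \<omega> (B k))) K"
proof -
  interpret P: prob_space "PiM I (\<lambda>_. NN)" by (rule PP_prob)
  have "P.indep_vars (\<lambda>k. PiM (B k) (\<lambda>_. NN)) (\<lambda>k \<omega>. restrict (\<lambda>i. \<omega> i) (B k)) K"
    by (rule P.indep_vars_restrict[OF PP_indep[OF assms(1)] assms(2,3)])
  from P.indep_vars_compose2[OF this, of G "\<lambda>_. borel"] assms(4)
  show ?thesis by simp
qed

lemma PP_pair:
  fixes I :: "'i set" and Y :: "'k \<Rightarrow> ('i \<Rightarrow> real) \<Rightarrow> real"
  assumes ind: "prob_space.indep_vars (PiM I (\<lambda>_. NN)) (\<lambda>_. borel) Y K"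
    and "k \<in> K" "m \<in> K" "k \<noteq> m"
    and ik: "integrable (PiM I (\<lambda>_. NN)) (Y k)" and im: "integrable (PiM I (\<lambda>_. NN)) (Y m)"
  shows "integral\<^sup>L (PiM I (\<lambda>_. NN)) (\<lambda>\<omega>. Y k \<omega> * Y m \<omega>) =
           integral\<^sup>L (PiM I (\<lambda>_. NN)) (Y k) * integral\<^sup>L (PiM I (\<lambda>_. NN)) (Y m)"
    "integrable (PiM I (\<lambda>_. NN)) (\<lambda>\<omega>. Y k \<omega> * Y m \<omega>)"
proof -
  interpret P: prob_space "PiM I (\<lambda>_. NN)" by (rule PP_prob)
  have ind2: "P.indep_vars (\<lambda>_. borel) Y {k, m}"
    by (rule P.indep_vars_subset[OF ind]) (use assms in auto)
  have int: "\<And>i. i \<in> {k, m} \<Longrightarrow> integrable (PiM I (\<lambda>_. NN)) (Y i)" using ik im by auto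
  have e1: "(\<lambda>\<omega>. \<Prod>i\<in>{k, m}. Y i \<omega>) = (\<lambda>\<omega>. Y k \<omega> * Y m \<omega>)"
    using \<open>k \<noteq> m\<close> by auto
  have e2: "(\<Prod>i\<in>{k, m}. integral\<^sup>L (PiM I (\<lambda>_. NN)) (Y i)) =
      integral\<^sup>L (PiM I (\<lambda>_. NN)) (Y k) * integral\<^sup>L (PiM I (\<lambda>_. NN)) (Y m)"
    using \<open>k \<noteq> m\<close> by auto
  show "integral\<^sup>L (PiM I (\<lambda>_. NN)) (\<lambda>\<omega>. Y k \<omega> * Y m \<omega>) =
           integral\<^sup>L (PiM I (\<lambda>_. NN)) (Y k) * integral\<^sup>L (PiM I (\<lambda>_. NN)) (Y m)"
    using P.indep_vars_lebesgue_integral[OF _ ind2 int] e1 e2 by simp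
  show "integrable (PiM I (\<lambda>_. NN)) (\<lambda>\<omega>. Y k \<omega> * Y m \<omega>)"
    using P.indep_vars_integrable[OF _ ind2 int] e1 by simp
qed

lemma PP_xy:
  fixes I :: "'i set"
  assumes x: "x \<in> I" and y: "y \<in> I"
  shows "integrable (PiM I (\<lambda>_. NN)) (\<lambda>\<omega>. \<omega> x * \<omega> y)"
        "integral\<^sup>L (PiM I (\<lambda>_. NN)) (\<lambda>\<omega>. \<omega> x * \<omega> y) = (if x = y then 1 else 0)"
proof -
  have "integrable (PiM I (\<lambda>_. NN)) (\<lambda>\<omega>. \<omega> x * \<omega> y) \<and>
        integral\<^sup>L (PiM I (\<lambda>_. NN)) (\<lambda>\<omega>. \<omega> x * \<omega> y) = (if x = y then 1 else 0)"
  proof (cases "x = y")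
    case True
    have f: "(\<lambda>t::real. t ^ 2) \<in> borel_measurable borel" by measurable
    have "(\<lambda>\<omega>::'i\<Rightarrow>real. \<omega> x * \<omega> y) = (\<lambda>\<omega>. (\<omega> x) ^ 2)" unfolding True power2_eq_square ..
    then show ?thesis using PP_comp[OF x f NN_m2(1)] NN_m2(2) True by simp
  next
    case False
    interpret P: prob_space "PiM I (\<lambda>_. NN)" by (rule PP_prob)
    have ne: "I \<noteq> {}" using x by auto
    have idm: "(\<lambda>t::real. t) \<in> measurable NN borel" by (rule measurable_ident_sets) simp
    have ind: "P.indep_vars (\<lambda>_. borel) (\<lambda>i \<omega>. \<omega> i) I"
      by (rule P.indep_vars_compose2[where Y="\<lambda>_ t. t" and N="\<lambda>_. borel", OF PP_indep[OF ne] idm])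
    have f: "(\<lambda>t::real. t ^ 1) \<in> borel_measurable borel" by measurable
    have ix: "integrable (PiM I (\<lambda>_. NN)) (\<lambda>\<omega>. \<omega> x)" using PP_comp(1)[OF x f NN_m1(1)] by simp
    have iy: "integrable (PiM I (\<lambda>_. NN)) (\<lambda>\<omega>. \<omega> y)" using PP_comp(1)[OF y f NN_m1(1)] by simp
    have ex: "integral\<^sup>L (PiM I (\<lambda>_. NN)) (\<lambda>\<omega>. \<omega> x) = 0"
      using PP_comp(2)[OF x f NN_m1(1)] NN_m1(2) by simp
    show ?thesis
      using PP_pair[OF ind x y False ix iy] ex False by simp
  qed
  then show "integrable (PiM I (\<lambda>_. NN)) (\<lambda>\<omega>. \<omega> x * \<omega> y)"
        "integral\<^sup>L (PiM I (\<lambda>_. NN)) (\<lambda>\<omega>. \<omega> x * \<omega> y) = (if x = y then 1 else 0)" by auto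
qed

definition lin :: "('i \<Rightarrow> real) \<Rightarrow> 'i set \<Rightarrow> ('i \<Rightarrow> real) \<Rightarrow> real" where
  "lin c S \<omega> = (\<Sum>x\<in>S. c x * \<omega> x)"

lemma lin_meas:
  assumes "S \<subseteq> I"
  shows "lin c S \<in> borel_measurable (PiM I (\<lambda>_. NN))"
proof -
  have "(\<lambda>\<omega>. \<Sum>x\<in>S. c x * \<omega> x) \<in> borel_measurable (PiM I (\<lambda>_. NN))"
  proof (rule borel_measurable_sum)
    fix x assume "x \<in> S"
    then have "x \<in> I" using assms by auto
    then show "(\<lambda>\<omega>. c x * \<omega> x) \<in> borel_measurable (PiM I (\<lambda>_. NN))"
      by (intro borel_measurable_times borel_measurable_const PP_coord_borel)
  qed
  then show ?thesis unfolding lin_def[abs_def] .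
qed

lemma wcs:
  fixes c z :: "'i \<Rightarrow> real"
  shows "(\<Sum>x\<in>S. c x * z x)\<^sup>2 \<le> (\<Sum>x\<in>S. \<bar>c x\<bar>) * (\<Sum>x\<in>S. \<bar>c x\<bar> * (z x)\<^sup>2)"
proof -
  have e1: "(\<Sum>x\<in>S. c x * z x) = (\<Sum>x\<in>S. sqrt \<bar>c x\<bar> * (sgn (c x) * sqrt \<bar>c x\<bar> * z x))"
  proof (rule sum.cong[OF refl])
    fix x
    have "sqrt \<bar>c x\<bar> * (sgn (c x) * sqrt \<bar>c x\<bar> * z x) = sgn (c x) * (sqrt \<bar>c x\<bar> * sqrt \<bar>c x\<bar>) * z x"
      by (simp only: mult_ac)
    also have "\<dots> = sgn (c x) * \<bar>c x\<bar> * z x" by simp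
    also have "\<dots> = c x * z x" by (simp add: sgn_mult_abs)
    finally show "c x * z x = sqrt \<bar>c x\<bar> * (sgn (c x) * sqrt \<bar>c x\<bar> * z x)" by (rule sym)
  qed
  have e2: "(sqrt \<bar>c x\<bar>)\<^sup>2 = \<bar>c x\<bar>" for x by simp
  have e3: "(sgn (c x) * sqrt \<bar>c x\<bar> * z x)\<^sup>2 = \<bar>c x\<bar> * (z x)\<^sup>2" for x
    by (cases "c x = 0") (auto simp: power_mult_distrib sgn_if)
  show ?thesis
    using Cauchy_Schwarz_ineq_sum[of "\<lambda>x. sqrt \<bar>c x\<bar>" "\<lambda>x. sgn (c x) * sqrt \<bar>c x\<bar> * z x" S]
    unfolding e1[symmetric] e2 e3 .
qed

lemma lin_mom2:
  fixes I :: "'i set"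
  assumes "finite S" "S \<subseteq> I"
  shows "integrable (PiM I (\<lambda>_. NN)) (\<lambda>\<omega>. lin c S \<omega> * lin c' S \<omega>)"
        "integral\<^sup>L (PiM I (\<lambda>_. NN)) (\<lambda>\<omega>. lin c S \<omega> * lin c' S \<omega>) = (\<Sum>x\<in>S. c x * c' x)"
proof -
  have eq: "(\<lambda>\<omega>. lin c S \<omega> * lin c' S \<omega>) = (\<lambda>\<omega>. \<Sum>x\<in>S. \<Sum>y\<in>S. (c x * c' y) * (\<omega> x * \<omega> y))"
    by (rule ext) (simp add: lin_def sum_product mult_ac)
  have int: "integrable (PiM I (\<lambda>_. NN)) (\<lambda>\<omega>. (c x * c' y) * (\<omega> x * \<omega> y))" if "x \<in> S" "y \<in> S" for x y
    using PP_xy(1)[of x I y] that assms(2) by auto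
  show "integrable (PiM I (\<lambda>_. NN)) (\<lambda>\<omega>. lin c S \<omega> * lin c' S \<omega>)"
    unfolding eq by (rule Bochner_Integration.integrable_sum, rule Bochner_Integration.integrable_sum, rule int)
  have "integral\<^sup>L (PiM I (\<lambda>_. NN)) (\<lambda>\<omega>. lin c S \<omega> * lin c' S \<omega>) =
        (\<Sum>x\<in>S. \<Sum>y\<in>S. (c x * c' y) * integral\<^sup>L (PiM I (\<lambda>_. NN)) (\<lambda>\<omega>. \<omega> x * \<omega> y))"
  proof -
    have "integral\<^sup>L (PiM I (\<lambda>_. NN)) (\<lambda>\<omega>. \<Sum>x\<in>S. \<Sum>y\<in>S. (c x * c' y) * (\<omega> x * \<omega> y))
       = (\<Sum>x\<in>S. integral\<^sup>L (PiM I (\<lambda>_. NN)) (\<lambda>\<omega>. \<Sum>y\<in>S. (c x * c' y) * (\<omega> x * \<omega> y)))"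
      by (rule Bochner_Integration.integral_sum, rule Bochner_Integration.integrable_sum, rule int)
    also have "\<dots> = (\<Sum>x\<in>S. \<Sum>y\<in>S. integral\<^sup>L (PiM I (\<lambda>_. NN)) (\<lambda>\<omega>. (c x * c' y) * (\<omega> x * \<omega> y)))"
    proof (rule sum.cong[OF refl])
      fix x assume xs: "x \<in> S"
      show "integral\<^sup>L (PiM I (\<lambda>_. NN)) (\<lambda>\<omega>. \<Sum>y\<in>S. (c x * c' y) * (\<omega> x * \<omega> y)) =
        (\<Sum>y\<in>S. integral\<^sup>L (PiM I (\<lambda>_. NN)) (\<lambda>\<omega>. (c x * c' y) * (\<omega> x * \<omega> y)))"
        by (rule Bochner_Integration.integral_sum, rule int[OF xs])
    qed
    also have "\<dots> = (\<Sum>x\<in>S. \<Sum>y\<in>S. (c x * c' y) * integral\<^sup>L (PiM I (\<lambda>_. NN)) (\<lambda>\<omega>. \<omega> x * \<omega> y))"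
      by (simp only: integral_mult_right_zero)
    finally show ?thesis unfolding eq .
  qed
  also have "\<dots> = (\<Sum>x\<in>S. \<Sum>y\<in>S. (c x * c' y) * (if x = y then 1 else 0))"
  proof (intro sum.cong refl)
    fix x y assume "x \<in> S" "y \<in> S"
    then have "x \<in> I" "y \<in> I" using assms(2) by auto
    then show "c x * c' y * integral\<^sup>L (PiM I (\<lambda>_. NN)) (\<lambda>\<omega>. \<omega> x * \<omega> y) =
               c x * c' y * (if x = y then 1 else 0)"
      using PP_xy(2)[of x I y] by simp
  qed
  also have "\<dots> = (\<Sum>x\<in>S. c x * c' x)"
    using assms(1) by (simp add: if_distrib sum.delta cong: if_cong)
  finally show "integral\<^sup>L (PiM I (\<lambda>_. NN)) (\<lambda>\<omega>. lin c S \<omega> * lin c' S \<omega>) = (\<Sum>x\<in>S. c x * c' x)" .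
qed

lemma lin4:
  fixes I :: "'i set"
  assumes fin: "finite S" and SI: "S \<subseteq> I"
  shows "integrable (PiM I (\<lambda>_. NN)) (\<lambda>\<omega>. (lin c S \<omega>) ^ 4)"
        "integral\<^sup>L (PiM I (\<lambda>_. NN)) (\<lambda>\<omega>. (lin c S \<omega>) ^ 4) \<le> 3 * (\<Sum>x\<in>S. \<bar>c x\<bar>) ^ 4"
proof -
  define A where "A = (\<Sum>x\<in>S. \<bar>c x\<bar>)"
  have A0: "0 \<le> A" unfolding A_def by (simp add: sum_nonneg)
  define g where "g \<omega> = A ^ 3 * (\<Sum>x\<in>S. \<bar>c x\<bar> * (\<omega> x) ^ 4)" for \<omega> :: "'i \<Rightarrow> real"
  have bnd: "(lin c S \<omega>) ^ 4 \<le> g \<omega>" for \<omega>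
  proof -
    define Q where "Q = (\<Sum>x\<in>S. \<bar>c x\<bar> * (\<omega> x)\<^sup>2)"
    have h1: "(lin c S \<omega>)\<^sup>2 \<le> A * Q"
      unfolding lin_def A_def Q_def by (rule wcs)
    have h2: "Q\<^sup>2 \<le> A * (\<Sum>x\<in>S. \<bar>c x\<bar> * (\<omega> x) ^ 4)"
    proof -
      have "Q\<^sup>2 \<le> (\<Sum>x\<in>S. \<bar>\<bar>c x\<bar>\<bar>) * (\<Sum>x\<in>S. \<bar>\<bar>c x\<bar>\<bar> * ((\<omega> x)\<^sup>2)\<^sup>2)"
        unfolding Q_def by (rule wcs)
      also have "\<dots> = A * (\<Sum>x\<in>S. \<bar>c x\<bar> * (\<omega> x) ^ 4)"
        unfolding A_def by (simp add: power_mult[symmetric])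
      finally show ?thesis .
    qed
    have Q0: "0 \<le> Q" unfolding Q_def by (simp add: sum_nonneg)
    have "(lin c S \<omega>) ^ 4 = ((lin c S \<omega>)\<^sup>2)\<^sup>2" by simp
    also have "\<dots> \<le> (A * Q)\<^sup>2"
      by (rule power_mono[OF h1]) simp
    also have "\<dots> = A\<^sup>2 * Q\<^sup>2" by (simp add: power_mult_distrib)
    also have "\<dots> \<le> A\<^sup>2 * (A * (\<Sum>x\<in>S. \<bar>c x\<bar> * (\<omega> x) ^ 4))"
      by (rule mult_left_mono[OF h2]) simp
    also have "\<dots> = g \<omega>" unfolding g_def by (simp add: power3_eq_cube power2_eq_square mult_ac)
    finally show ?thesis .
  qed
  have f4: "(\<lambda>t::real. t ^ 4) \<in> borel_measurable borel" by measurable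
  have ic: "integrable (PiM I (\<lambda>_. NN)) (\<lambda>\<omega>. \<bar>c x\<bar> * (\<omega> x) ^ 4)" if "x \<in> S" for x
  proof -
    have "x \<in> I" using that SI by auto
    then show ?thesis using PP_comp(1)[OF _ f4 NN_m4(1)] by (intro integrable_mult_right) simp
  qed
  have gi: "integrable (PiM I (\<lambda>_. NN)) g"
    unfolding g_def[abs_def]
    by (rule integrable_mult_right, rule Bochner_Integration.integrable_sum, rule ic)
  have gint: "integral\<^sup>L (PiM I (\<lambda>_. NN)) g = 3 * A ^ 4"
  proof -
    have "integral\<^sup>L (PiM I (\<lambda>_. NN)) g = A ^ 3 * (\<Sum>x\<in>S. integral\<^sup>L (PiM I (\<lambda>_. NN)) (\<lambda>\<omega>. \<bar>c x\<bar> * (\<omega> x) ^ 4))"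
      unfolding g_def[abs_def] integral_mult_right_zero
      by (subst Bochner_Integration.integral_sum) (rule ic, simp_all)
    also have "\<dots> = A ^ 3 * (\<Sum>x\<in>S. \<bar>c x\<bar> * 3)"
    proof (intro arg_cong[where f="\<lambda>u. A ^ 3 * u"] sum.cong refl)
      fix x assume "x \<in> S"
      then have "x \<in> I" using SI by auto
      then show "integral\<^sup>L (PiM I (\<lambda>_. NN)) (\<lambda>\<omega>. \<bar>c x\<bar> * (\<omega> x) ^ 4) = \<bar>c x\<bar> * 3"
        unfolding integral_mult_right_zero using PP_comp(2)[OF \<open>x \<in> I\<close> f4 NN_m4(1)] NN_m4(2) by simp
    qed
    also have "\<dots> = 3 * A ^ 4" unfolding A_def sum_distrib_right[symmetric]
      by (simp add: power_Suc[symmetric] mult_ac del: power_Suc)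
    finally show ?thesis .
  qed
  have m: "(\<lambda>\<omega>. (lin c S \<omega>) ^ 4) \<in> borel_measurable (PiM I (\<lambda>_. NN))"
    using lin_meas[OF SI, of c] by measurable
  show i4: "integrable (PiM I (\<lambda>_. NN)) (\<lambda>\<omega>. (lin c S \<omega>) ^ 4)"
  proof (rule Bochner_Integration.integrable_bound[OF gi m])
    show "AE x in PiM I (\<lambda>_. NN). norm ((lin c S x) ^ 4) \<le> norm (g x)"
    proof (rule AE_I2)
      fix \<omega>
      have "0 \<le> (lin c S \<omega>) ^ 4" by simp
      then show "norm ((lin c S \<omega>) ^ 4) \<le> norm (g \<omega>)" using bnd[of \<omega>] by simp
    qed
  qed
  have "integral\<^sup>L (PiM I (\<lambda>_. NN)) (\<lambda>\<omega>. (lin c S \<omega>) ^ 4) \<le> integral\<^sup>L (PiM I (\<lambda>_. NN)) g"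
    by (rule Bochner_Integration.integral_mono[OF i4 gi bnd])
  then show "integral\<^sup>L (PiM I (\<lambda>_. NN)) (\<lambda>\<omega>. (lin c S \<omega>) ^ 4) \<le> 3 * (\<Sum>x\<in>S. \<bar>c x\<bar>) ^ 4"
    using gint unfolding A_def by simp
qed

lemma lin_upd:
  assumes "finite S" "x0 \<in> S"
  shows "lin c S (w(x0 := y)) = c x0 * y + (\<Sum>x\<in>S - {x0}. c x * w x)"
proof -
  have "lin c S (w(x0 := y)) = c x0 * y + (\<Sum>x\<in>S - {x0}. c x * (w(x0 := y)) x)"
    unfolding lin_def using assms by (simp add: sum.remove)
  also have "(\<Sum>x\<in>S - {x0}. c x * (w(x0 := y)) x) = (\<Sum>x\<in>S - {x0}. c x * w x)"
    by (intro sum.cong refl) auto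
  finally show ?thesis .
qed

lemma lin_AE_nz:
  fixes I :: "'i set"
  assumes fin: "finite I" and SI: "S \<subseteq> I" and x0: "x0 \<in> S" and c0: "c x0 \<noteq> 0"
  shows "AE \<omega> in PiM I (\<lambda>_. NN). lin c S \<omega> \<noteq> 0"
proof -
  interpret product_prob_space "\<lambda>_. NN" I
    by (simp add: product_prob_space_def product_prob_space_axioms_def product_sigma_finite_def
        NN_prob prob_space_imp_sigma_finite)
  have finS: "finite S" using fin SI finite_subset by auto
  define J where "J = I - {x0}"
  have IJ: "I = insert x0 J" "x0 \<notin> J" "finite J" using x0 SI fin unfolding J_def by auto
  define Z where "Z = {\<omega> \<in> space (PiM I (\<lambda>_. NN)). lin c S \<omega> = 0}"
  have lm: "lin c S \<in> borel_measurable (PiM I (\<lambda>_. NN))" by (rule lin_meas[OF SI])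
  have Zs: "Z \<in> sets (PiM I (\<lambda>_. NN))" unfolding Z_def using lm by measurable
  have im: "indicator Z \<in> borel_measurable (PiM (insert x0 J) (\<lambda>_. NN))"
    using Zs IJ(1) by simp
  have "emeasure (PiM I (\<lambda>_. NN)) Z = (\<integral>\<^sup>+ \<omega>. indicator Z \<omega> \<partial>PiM I (\<lambda>_. NN))"
    using Zs by simp
  also have "\<dots> = (\<integral>\<^sup>+ w. (\<integral>\<^sup>+ y. indicator Z (w(x0 := y)) \<partial>NN) \<partial>PiM J (\<lambda>_. NN))"
    unfolding IJ(1) by (rule product_nn_integral_insert[OF IJ(3) IJ(2) im])
  also have "\<dots> = (\<integral>\<^sup>+ w. 0 \<partial>PiM J (\<lambda>_. NN))"
  proof (rule nn_integral_cong)
    fix w assume "w \<in> space (PiM J (\<lambda>_. NN))"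
    define r where "r = - (\<Sum>x\<in>S - {x0}. c x * w x) / c x0"
    have le: "indicator Z (w(x0 := y)) \<le> (indicator {r} y :: ennreal)" for y
    proof (cases "w(x0 := y) \<in> Z")
      case True
      then have "lin c S (w(x0 := y)) = 0" unfolding Z_def by simp
      then have "c x0 * y + (\<Sum>x\<in>S - {x0}. c x * w x) = 0" using lin_upd[OF finS x0] by simp
      then have "y = r" unfolding r_def using c0 by (simp add: field_simps)
      then show ?thesis by (simp add: indicator_def)
    qed simp
    have "(\<integral>\<^sup>+ y. indicator Z (w(x0 := y)) \<partial>NN) \<le> (\<integral>\<^sup>+ y. indicator {r} y \<partial>NN)"
      by (rule nn_integral_mono) (rule le)
    also have "\<dots> = emeasure NN {r}" by (rule nn_integral_indicator) simp
    also have "\<dots> = 0" by (rule NN_singleton)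
    finally show "(\<integral>\<^sup>+ y. indicator Z (w(x0 := y)) \<partial>NN) = 0" by simp
  qed
  also have "\<dots> = 0" by simp
  finally have "Z \<in> null_sets (PiM I (\<lambda>_. NN))" using Zs by auto
  then show ?thesis
    by (rule AE_I') (auto simp: Z_def)
qed

lemma absprod: "\<bar>(a::real) * b\<bar> \<le> a\<^sup>2 + b\<^sup>2"
proof -
  have "0 \<le> (\<bar>a\<bar> - \<bar>b\<bar>)\<^sup>2" by simp
  also have "\<dots> = a\<^sup>2 - 2 * (\<bar>a\<bar> * \<bar>b\<bar>) + b\<^sup>2" by (simp add: power2_diff)
  finally have "2 * (\<bar>a\<bar> * \<bar>b\<bar>) \<le> a\<^sup>2 + b\<^sup>2" by simp
  moreover have "0 \<le> \<bar>a\<bar> * \<bar>b\<bar>" by simp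
  ultimately show ?thesis unfolding abs_mult by linarith
qed

lemma (in prob_space) cheb_sum:
  fixes Y :: "nat \<Rightarrow> 'a \<Rightarrow> real"
  assumes meas: "\<And>k. k < d \<Longrightarrow> Y k \<in> borel_measurable M"
    and sq: "\<And>k. k < d \<Longrightarrow> integrable M (\<lambda>\<omega>. (Y k \<omega>)\<^sup>2)"
    and bnd: "\<And>k. k < d \<Longrightarrow> expectation (\<lambda>\<omega>. (Y k \<omega>)\<^sup>2) \<le> C"
    and mean: "\<And>k. k < d \<Longrightarrow> expectation (Y k) = \<mu>"
    and unc: "\<And>k m. k < d \<Longrightarrow> m < d \<Longrightarrow> k \<noteq> m \<Longrightarrow> expectation (\<lambda>\<omega>. Y k \<omega> * Y m \<omega>) = \<mu> * \<mu>"
    and t: "t > 0" and d: "d > 0"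
  shows "prob {\<omega> \<in> space M. t * real d \<le> \<bar>(\<Sum>k<d. Y k \<omega>) - real d * \<mu>\<bar>} \<le> C / (real d * t\<^sup>2)"
proof -
  have iY: "integrable M (Y k)" if "k < d" for k
    using square_integrable_imp_integrable[OF meas[OF that] sq[OF that]] .
  have iP: "integrable M (\<lambda>\<omega>. Y k \<omega> * Y m \<omega>)" if "k < d" "m < d" for k m
  proof (rule Bochner_Integration.integrable_bound)
    show "integrable M (\<lambda>\<omega>. (Y k \<omega>)\<^sup>2 + (Y m \<omega>)\<^sup>2)" using sq that by simp
    show "(\<lambda>\<omega>. Y k \<omega> * Y m \<omega>) \<in> borel_measurable M" using meas that by simp
    show "AE \<omega> in M. norm (Y k \<omega> * Y m \<omega>) \<le> norm ((Y k \<omega>)\<^sup>2 + (Y m \<omega>)\<^sup>2)"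
    proof (rule AE_I2)
      fix \<omega>
      have "\<bar>Y k \<omega> * Y m \<omega>\<bar> \<le> (Y k \<omega>)\<^sup>2 + (Y m \<omega>)\<^sup>2"
        by (rule absprod)
      then show "norm (Y k \<omega> * Y m \<omega>) \<le> norm ((Y k \<omega>)\<^sup>2 + (Y m \<omega>)\<^sup>2)" by simp
    qed
  qed
  define Z where "Z k \<omega> = Y k \<omega> - \<mu>" for k \<omega>
  have ZZ: "(\<lambda>\<omega>. Z k \<omega> * Z m \<omega>) = (\<lambda>\<omega>. Y k \<omega> * Y m \<omega> - \<mu> * Y k \<omega> - \<mu> * Y m \<omega> + \<mu> * \<mu>)" for k m
    unfolding Z_def by (rule ext) (simp add: algebra_simps)
  have iZ: "integrable M (\<lambda>\<omega>. Z k \<omega> * Z m \<omega>)" if "k < d" "m < d" for k m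
    unfolding ZZ using iP[OF that] iY[OF that(1)] iY[OF that(2)] by simp
  have eZ: "expectation (\<lambda>\<omega>. Z k \<omega> * Z m \<omega>) = (if k = m then expectation (\<lambda>\<omega>. (Y k \<omega>)\<^sup>2) - \<mu> * \<mu> else 0)"
    if "k < d" "m < d" for k m
  proof -
    have "expectation (\<lambda>\<omega>. Z k \<omega> * Z m \<omega>) = expectation (\<lambda>\<omega>. Y k \<omega> * Y m \<omega>) - \<mu> * \<mu> - \<mu> * \<mu> + \<mu> * \<mu>"
      unfolding ZZ using iP[OF that] iY[OF that(1)] iY[OF that(2)] mean[OF that(1)] mean[OF that(2)]
      by (simp add: prob_space)
    then show ?thesis using unc[OF that] by (auto simp: power2_eq_square)
  qed
  define f where "f \<omega> = (\<Sum>k<d. Z k \<omega>)" for \<omega>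
  have f_eq: "f \<omega> = (\<Sum>k<d. Y k \<omega>) - real d * \<mu>" for \<omega>
    unfolding f_def Z_def by (simp add: sum_subtractf)
  have f2: "(\<lambda>\<omega>. (f \<omega>)\<^sup>2) = (\<lambda>\<omega>. \<Sum>k<d. \<Sum>m<d. Z k \<omega> * Z m \<omega>)"
    unfolding f_def by (rule ext) (simp add: power2_eq_square sum_product)
  have fm: "f \<in> borel_measurable M"
    unfolding f_def Z_def by (intro borel_measurable_sum borel_measurable_diff meas borel_measurable_const) simp
  have if2: "integrable M (\<lambda>\<omega>. (f \<omega>)\<^sup>2)"
    unfolding f2 by (rule Bochner_Integration.integrable_sum, rule Bochner_Integration.integrable_sum, rule iZ) auto
  have "expectation (\<lambda>\<omega>. (f \<omega>)\<^sup>2) = (\<Sum>k<d. \<Sum>m<d. expectation (\<lambda>\<omega>. Z k \<omega> * Z m \<omega>))"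
    unfolding f2
    by (subst Bochner_Integration.integral_sum, rule Bochner_Integration.integrable_sum, rule iZ, simp, simp,
        rule sum.cong[OF refl], rule Bochner_Integration.integral_sum, rule iZ) auto
  also have "\<dots> = (\<Sum>k<d. expectation (\<lambda>\<omega>. (Y k \<omega>)\<^sup>2) - \<mu> * \<mu>)"
  proof (rule sum.cong[OF refl])
    fix k assume "k \<in> {..<d}"
    then have k: "k < d" by simp
    have "(\<Sum>m<d. expectation (\<lambda>\<omega>. Z k \<omega> * Z m \<omega>)) =
          (\<Sum>m<d. if m = k then expectation (\<lambda>\<omega>. (Y k \<omega>)\<^sup>2) - \<mu> * \<mu> else 0)"
      by (rule sum.cong[OF refl]) (use eZ k in auto)
    also have "\<dots> = expectation (\<lambda>\<omega>. (Y k \<omega>)\<^sup>2) - \<mu> * \<mu>" using k by simp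
    finally show "(\<Sum>m<d. expectation (\<lambda>\<omega>. Z k \<omega> * Z m \<omega>)) = expectation (\<lambda>\<omega>. (Y k \<omega>)\<^sup>2) - \<mu> * \<mu>" .
  qed
  also have "\<dots> \<le> (\<Sum>k<d. C)"
  proof (rule sum_mono)
    fix k assume "k \<in> {..<d}"
    then have "k < d" by simp
    then show "expectation (\<lambda>\<omega>. (Y k \<omega>)\<^sup>2) - \<mu> * \<mu> \<le> C" using bnd[of k] zero_le_square[of \<mu>] by linarith
  qed
  also have "\<dots> = real d * C" by simp
  finally have Ef: "expectation (\<lambda>\<omega>. (f \<omega>)\<^sup>2) \<le> real d * C" .
  have tdp: "t * real d > 0" using t d by simp
  have "prob {\<omega> \<in> space M. t * real d \<le> \<bar>f \<omega>\<bar>} \<le> expectation (\<lambda>\<omega>. (f \<omega>)\<^sup>2) / (t * real d)\<^sup>2"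
    by (rule second_moment_method[OF fm if2 tdp])
  also have "\<dots> \<le> real d * C / (t * real d)\<^sup>2"
    by (rule divide_right_mono[OF Ef]) simp
  also have "\<dots> = C / (real d * t\<^sup>2)" using d by (simp add: power2_eq_square field_simps)
  finally show ?thesis unfolding f_eq .
qed

lemma lin_restrict: "lin c S (restrict \<omega> S) = lin c S \<omega>"
  unfolding lin_def by (intro sum.cong refl) simp

lemma blockY:
  fixes I :: "'i set" and B :: "'k \<Rightarrow> 'i set"
  assumes "I \<noteq> {}" "\<And>k. k \<in> K \<Longrightarrow> B k \<subseteq> I" "disjoint_family_on B K"
  shows "prob_space.indep_vars (PiM I (\<lambda>_. NN)) (\<lambda>_. borel)
           (\<lambda>k \<omega>. lin c1 (B k) \<omega> * lin c2 (B k) \<omega>) K"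
proof -
  interpret P: prob_space "PiM I (\<lambda>_. NN)" by (rule PP_prob)
  have G: "(\<lambda>r. lin c1 (B k) r * lin c2 (B k) r) \<in> borel_measurable (PiM (B k) (\<lambda>_. NN))" for k
    using lin_meas[of "B k" "B k" c1, OF subset_refl] lin_meas[of "B k" "B k" c2, OF subset_refl] by measurable
  have "P.indep_vars (\<lambda>_. borel) (\<lambda>k \<omega>. (\<lambda>r. lin c1 (B k) r * lin c2 (B k) r) (restrict \<omega> (B k))) K"
    by (rule PP_block_indep[OF assms G])
  then show ?thesis
    by (subst (asm) P.indep_vars_cong[OF refl _ refl]) (simp_all add: lin_restrict)
qed

lemma block_cheb:
  fixes I :: "'i set" and B :: "nat \<Rightarrow> 'i set"
  assumes fin: "finite I" and ne: "I \<noteq> {}" and d: "d > 0" and BI: "\<And>k. k < d \<Longrightarrow> B k \<subseteq> I"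
    and disj: "disjoint_family_on B {..<d}"
    and A1: "\<And>k. k < d \<Longrightarrow> (\<Sum>x\<in>B k. \<bar>c1 x\<bar>) = A1"
    and A2: "\<And>k. k < d \<Longrightarrow> (\<Sum>x\<in>B k. \<bar>c2 x\<bar>) = A2"
    and mu: "\<And>k. k < d \<Longrightarrow> (\<Sum>x\<in>B k. c1 x * c2 x) = \<mu>"
    and t: "t > 0"
  shows "measure (PiM I (\<lambda>_. NN)) {\<omega> \<in> space (PiM I (\<lambda>_. NN)).
            t * real d \<le> \<bar>(\<Sum>k<d. lin c1 (B k) \<omega> * lin c2 (B k) \<omega>) - real d * \<mu>\<bar>}
         \<le> (3 * (A1 ^ 4 + A2 ^ 4)) / (real d * t\<^sup>2)"
proof -
  interpret P: prob_space "PiM I (\<lambda>_. NN)" by (rule PP_prob)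
  have finB: "finite (B k)" if "k < d" for k using BI[OF that] fin finite_subset by auto
  define Y where "Y k \<omega> = lin c1 (B k) \<omega> * lin c2 (B k) \<omega>" for k \<omega>
  have ind: "P.indep_vars (\<lambda>_. borel) Y {..<d}"
    unfolding Y_def[abs_def] by (rule blockY[OF ne _ disj]) (use BI in auto)
  have mY: "Y k \<in> borel_measurable (PiM I (\<lambda>_. NN))" if "k < d" for k
    unfolding Y_def[abs_def]
    using lin_meas[OF BI[OF that], of c1] lin_meas[OF BI[OF that], of c2] by measurable
  have i4: "integrable (PiM I (\<lambda>_. NN)) (\<lambda>\<omega>. (lin c1 (B k) \<omega>) ^ 4 + (lin c2 (B k) \<omega>) ^ 4)" if "k < d" for k
    using lin4(1)[OF finB[OF that] BI[OF that], of c1] lin4(1)[OF finB[OF that] BI[OF that], of c2] by simp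
  have pb: "(Y k \<omega>)\<^sup>2 \<le> (lin c1 (B k) \<omega>) ^ 4 + (lin c2 (B k) \<omega>) ^ 4" for k \<omega>
  proof -
    have "(Y k \<omega>)\<^sup>2 = \<bar>(lin c1 (B k) \<omega>)\<^sup>2 * (lin c2 (B k) \<omega>)\<^sup>2\<bar>"
      unfolding Y_def by (simp add: power_mult_distrib)
    also have "\<dots> \<le> ((lin c1 (B k) \<omega>)\<^sup>2)\<^sup>2 + ((lin c2 (B k) \<omega>)\<^sup>2)\<^sup>2" by (rule absprod)
    also have "\<dots> = (lin c1 (B k) \<omega>) ^ 4 + (lin c2 (B k) \<omega>) ^ 4" by (simp add: power_mult[symmetric])
    finally show ?thesis .
  qed
  have sq: "integrable (PiM I (\<lambda>_. NN)) (\<lambda>\<omega>. (Y k \<omega>)\<^sup>2)" if "k < d" for k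
  proof (rule Bochner_Integration.integrable_bound[OF i4[OF that]])
    show "(\<lambda>\<omega>. (Y k \<omega>)\<^sup>2) \<in> borel_measurable (PiM I (\<lambda>_. NN))" using mY[OF that] by measurable
    show "AE \<omega> in PiM I (\<lambda>_. NN). norm ((Y k \<omega>)\<^sup>2) \<le> norm ((lin c1 (B k) \<omega>) ^ 4 + (lin c2 (B k) \<omega>) ^ 4)"
    proof (rule AE_I2)
      fix \<omega>
      have "0 \<le> (lin c1 (B k) \<omega>) ^ 4 + (lin c2 (B k) \<omega>) ^ 4" by simp
      then show "norm ((Y k \<omega>)\<^sup>2) \<le> norm ((lin c1 (B k) \<omega>) ^ 4 + (lin c2 (B k) \<omega>) ^ 4)"
        using pb[of k \<omega>] by simp
    qed
  qed
  have bnd: "P.expectation (\<lambda>\<omega>. (Y k \<omega>)\<^sup>2) \<le> 3 * (A1 ^ 4 + A2 ^ 4)" if "k < d" for k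
  proof -
    have "P.expectation (\<lambda>\<omega>. (Y k \<omega>)\<^sup>2) \<le> P.expectation (\<lambda>\<omega>. (lin c1 (B k) \<omega>) ^ 4 + (lin c2 (B k) \<omega>) ^ 4)"
      by (rule Bochner_Integration.integral_mono[OF sq[OF that] i4[OF that] pb])
    also have "\<dots> = P.expectation (\<lambda>\<omega>. (lin c1 (B k) \<omega>) ^ 4) + P.expectation (\<lambda>\<omega>. (lin c2 (B k) \<omega>) ^ 4)"
      by (rule Bochner_Integration.integral_add[OF lin4(1)[OF finB[OF that] BI[OF that]] lin4(1)[OF finB[OF that] BI[OF that]]])
    also have "\<dots> \<le> 3 * A1 ^ 4 + 3 * A2 ^ 4"
      using lin4(2)[OF finB[OF that] BI[OF that], of c1] lin4(2)[OF finB[OF that] BI[OF that], of c2]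
        A1[OF that] A2[OF that] by simp
    finally show ?thesis by simp
  qed
  have iY: "integrable (PiM I (\<lambda>_. NN)) (Y k)" if "k < d" for k
    unfolding Y_def[abs_def] by (rule lin_mom2(1)[OF finB[OF that] BI[OF that]])
  have mean: "P.expectation (Y k) = \<mu>" if "k < d" for k
    unfolding Y_def[abs_def] using lin_mom2(2)[OF finB[OF that] BI[OF that], of c1 c2] mu[OF that] by simp
  have unc: "P.expectation (\<lambda>\<omega>. Y k \<omega> * Y m \<omega>) = \<mu> * \<mu>" if "k < d" "m < d" "k \<noteq> m" for k m
    using PP_pair(1)[OF ind _ _ that(3) iY[OF that(1)] iY[OF that(2)]] that mean by simp
  have "P.prob {\<omega> \<in> space (PiM I (\<lambda>_. NN)). t * real d \<le> \<bar>(\<Sum>k<d. Y k \<omega>) - real d * \<mu>\<bar>}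
        \<le> (3 * (A1 ^ 4 + A2 ^ 4)) / (real d * t\<^sup>2)"
    by (rule P.cheb_sum[OF mY sq bnd mean unc t d])
  then show ?thesis unfolding Y_def .
qed

definition Bk :: "nat \<Rightarrow> nat \<Rightarrow> nat \<Rightarrow> (nat \<times> nat \<times> nat) set" where
  "Bk l l' k = {..<l} \<times> {..<l'} \<times> {k}"

definition ca :: "nat \<Rightarrow> nat \<Rightarrow> nat \<Rightarrow> nat \<times> nat \<times> nat \<Rightarrow> real" where
  "ca l l' i x = (if fst x = i then 1 / real l' else 0) - 1 / (real l * real l')"

definition cb :: "nat \<Rightarrow> nat \<Rightarrow> nat \<Rightarrow> nat \<times> nat \<times> nat \<Rightarrow> real" where
  "cb l l' j x = (if fst (snd x) = j then 1 / real l else 0) - 1 / (real l * real l')"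

lemma sumB: "sum f (Bk l l' k) = (\<Sum>p<l. \<Sum>q<l'. f (p, q, k))"
  unfolding Bk_def by (simp add: sum.cartesian_product')

lemma base_lin:
  assumes "i < l"
  shows "vhat l' \<omega> i k - vmean l l' \<omega> k = lin (ca l l' i) (Bk l l' k) \<omega>"
proof -
  have "lin (ca l l' i) (Bk l l' k) \<omega> =
        (\<Sum>p<l. \<Sum>q<l'. (if p = i then \<omega> (p, q, k) / real l' else 0) - \<omega> (p, q, k) / (real l * real l'))"
    unfolding lin_def sumB ca_def by (intro sum.cong refl) (simp add: field_simps)
  also have "\<dots> = (\<Sum>p<l. \<Sum>q<l'. if p = i then \<omega> (p, q, k) / real l' else 0)
                 - (\<Sum>p<l. \<Sum>q<l'. \<omega> (p, q, k) / (real l * real l'))"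
    by (simp only: sum_subtractf)
  also have "(\<Sum>p<l. \<Sum>q<l'. if p = i then \<omega> (p, q, k) / real l' else 0) = (\<Sum>q<l'. \<omega> (i, q, k) / real l')"
    by (subst sum.swap) (use assms in \<open>simp add: sum.delta\<close>)
  also have "\<dots> = vhat l' \<omega> i k" unfolding vhat_def cvec_def by (simp add: sum_divide_distrib)
  also have "(\<Sum>p<l. \<Sum>q<l'. \<omega> (p, q, k) / (real l * real l')) = vmean l l' \<omega> k"
    unfolding vmean_def cvec_def by (simp add: sum_divide_distrib)
  finally show ?thesis by simp
qed

lemma base_lin':
  assumes "j < l'"
  shows "vhat' l \<omega> j k - vmean l l' \<omega> k = lin (cb l l' j) (Bk l l' k) \<omega>"
proof -
  have "lin (cb l l' j) (Bk l l' k) \<omega> =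
        (\<Sum>p<l. \<Sum>q<l'. (if q = j then \<omega> (p, q, k) / real l else 0) - \<omega> (p, q, k) / (real l * real l'))"
    unfolding lin_def sumB cb_def by (intro sum.cong refl) (simp add: field_simps)
  also have "\<dots> = (\<Sum>p<l. \<Sum>q<l'. if q = j then \<omega> (p, q, k) / real l else 0)
                 - (\<Sum>p<l. \<Sum>q<l'. \<omega> (p, q, k) / (real l * real l'))"
    by (simp only: sum_subtractf)
  also have "(\<Sum>p<l. \<Sum>q<l'. if q = j then \<omega> (p, q, k) / real l else 0) = (\<Sum>p<l. \<omega> (p, j, k) / real l)"
    using assms by (simp add: sum.delta)
  also have "\<dots> = vhat' l \<omega> j k" unfolding vhat'_def cvec_def by (simp add: sum_divide_distrib)
  also have "(\<Sum>p<l. \<Sum>q<l'. \<omega> (p, q, k) / (real l * real l')) = vmean l l' \<omega> k"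
    unfolding vmean_def cvec_def by (simp add: sum_divide_distrib)
  finally show ?thesis by simp
qed

lemma sum_base_v:
  assumes "l > 0" "l' > 0"
  shows "(\<Sum>i<l. base_v l l' s \<omega> i k) = 0"
proof -
  have "(\<Sum>i<l. base_v l l' s \<omega> i k) = ((\<Sum>i<l. vhat l' \<omega> i k) - real l * vmean l l' \<omega> k) / s"
    unfolding base_v_def by (simp add: sum_divide_distrib[symmetric] sum_subtractf)
  also have "(\<Sum>i<l. vhat l' \<omega> i k) = real l * vmean l l' \<omega> k"
  proof -
    have e: "real l * (x / (real l * real l')) = x / real l'" for x using assms by simp
    show ?thesis unfolding vhat_def vmean_def cvec_def by (simp add: sum_divide_distrib sum_distrib_left e)
  qed
  finally show ?thesis by simp
qed

lemma sum_base_v':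
  assumes "l > 0" "l' > 0"
  shows "(\<Sum>j<l'. base_v' l l' s \<omega> j k) = 0"
proof -
  have "(\<Sum>j<l'. base_v' l l' s \<omega> j k) = ((\<Sum>j<l'. vhat' l \<omega> j k) - real l' * vmean l l' \<omega> k) / s"
    unfolding base_v'_def by (simp add: sum_divide_distrib[symmetric] sum_subtractf)
  also have "(\<Sum>j<l'. vhat' l \<omega> j k) = real l' * vmean l l' \<omega> k"
  proof -
    have e: "real l' * (x / (real l * real l')) = x / real l" for x using assms by simp
    have sw: "(\<Sum>i<l. \<Sum>j<l'. \<omega> (i, j, k)) = (\<Sum>j<l'. \<Sum>i<l. \<omega> (i, j, k))"
      by (rule sum.swap)
    show ?thesis unfolding vhat'_def vmean_def cvec_def sw
      by (simp add: sum_divide_distrib sum_distrib_left e)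
  qed
  finally show ?thesis by simp
qed

lemma nonorth:
  fixes v :: "nat \<Rightarrow> nat \<Rightarrow> real"
  assumes n: "2 \<le> n" and d: "0 < d" and s: "\<And>k. k < d \<Longrightarrow> (\<Sum>i<n. v i k) = 0" and v0: "v 0 0 \<noteq> 0"
  shows "\<exists>i<n. \<exists>i'<n. i \<noteq> i' \<and> ipd d (v i) (v i') \<noteq> 0"
proof (rule ccontr)
  assume "\<not> ?thesis"
  then have off: "\<And>i i'. i < n \<Longrightarrow> i' < n \<Longrightarrow> i \<noteq> i' \<Longrightarrow> ipd d (v i) (v i') = 0" by blast
  have "0 = (\<Sum>k<d. (\<Sum>i<n. v i k) * (\<Sum>i'<n. v i' k))" using s by simp
  also have "\<dots> = (\<Sum>i<n. \<Sum>i'<n. ipd d (v i) (v i'))"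
    unfolding ipd_def sum_product by (simp add: sum.swap[of _ "{..<d}"])
  also have "\<dots> = (\<Sum>i<n. ipd d (v i) (v i))"
  proof (rule sum.cong[OF refl])
    fix i assume "i \<in> {..<n}"
    then have "(\<Sum>i'<n. ipd d (v i) (v i')) = (\<Sum>i'<n. if i' = i then ipd d (v i) (v i) else 0)"
      using off by (intro sum.cong refl) auto
    also have "\<dots> = ipd d (v i) (v i)" using \<open>i \<in> {..<n}\<close> by simp
    finally show "(\<Sum>i'<n. ipd d (v i) (v i')) = ipd d (v i) (v i)" .
  qed
  also have "\<dots> \<ge> ipd d (v 0) (v 0)"
    by (rule member_le_sum) (use n in \<open>auto simp: ipd_def intro!: sum_nonneg\<close>)
  also have "ipd d (v 0) (v 0) \<ge> v 0 0 * v 0 0"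
    unfolding ipd_def by (rule member_le_sum[of 0 "{..<d}" "\<lambda>k. v 0 k * v 0 k"]) (use d in auto)
  finally have "v 0 0 * v 0 0 \<le> 0" by simp
  moreover have "0 < v 0 0 * v 0 0" using v0 by (auto simp: zero_less_mult_iff linorder_neq_iff)
  ultimately show False by linarith
qed

lemma good_arith:
  fixes u v w sa sb t eps s D :: real
  assumes s: "s > 0" and D: "D > 0" and sa: "sa > 0" and sb: "sb > 0" and t: "t > 0"
    and t1: "t \<le> sa / 2" and t2: "t \<le> sb / 2" and t3: "t \<le> eps * sqrt (sa * sb) / 2"
    and u: "\<bar>u\<bar> < t * D" and v: "\<bar>v - D * sa\<bar> < t * D" and w: "\<bar>w - D * sb\<bar> < t * D"
  shows "sqrt (v / s\<^sup>2) \<noteq> 0 \<and> sqrt (w / s\<^sup>2) \<noteq> 0 \<and>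
         \<bar>(u / s\<^sup>2) / (sqrt (v / s\<^sup>2) * sqrt (w / s\<^sup>2))\<bar> \<le> eps"
proof -
  have tD1: "t * D \<le> D * sa / 2" using t1 D by (simp add: field_simps)
  have tD2: "t * D \<le> D * sb / 2" using t2 D by (simp add: field_simps)
  have v1: "v \<ge> D * sa / 2" using v tD1 by linarith
  have w1: "w \<ge> D * sb / 2" using w tD2 by linarith
  have "D * sa > 0" using D sa by simp
  then have vp: "v > 0" using v1 by linarith
  have "D * sb > 0" using D sb by simp
  then have wp: "w > 0" using w1 by linarith
  have sv: "sqrt (v / s\<^sup>2) = sqrt v / s" using s by (simp add: real_sqrt_divide)
  have sw: "sqrt (w / s\<^sup>2) = sqrt w / s" using s by (simp add: real_sqrt_divide)
  have e: "(u / s\<^sup>2) / (sqrt (v / s\<^sup>2) * sqrt (w / s\<^sup>2)) = u / sqrt (v * w)"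
    unfolding sv sw using s by (simp add: real_sqrt_mult power2_eq_square field_simps)
  have "sqrt (D * sa / 2 * (D * sb / 2)) \<le> sqrt (v * w)"
    using v1 w1 D sa sb vp wp by (intro real_sqrt_le_mono mult_mono) auto
  moreover have "sqrt (D * sa / 2 * (D * sb / 2)) = D / 2 * sqrt (sa * sb)"
  proof -
    have eq: "D * sa / 2 * (D * sb / 2) = (D / 2)\<^sup>2 * (sa * sb)" by (simp add: power2_eq_square field_simps)
    show ?thesis unfolding eq real_sqrt_mult[of "(D / 2)\<^sup>2"] real_sqrt_abs using D by simp
  qed
  ultimately have sq: "D / 2 * sqrt (sa * sb) \<le> sqrt (v * w)" by linarith
  have pos: "0 < D / 2 * sqrt (sa * sb)" using D sa sb by simp
  have "\<bar>u / sqrt (v * w)\<bar> = \<bar>u\<bar> / sqrt (v * w)" using vp wp by (simp add: abs_divide)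
  also have "\<dots> \<le> (t * D) / (D / 2 * sqrt (sa * sb))"
    using u sq pos by (intro frac_le) auto
  also have "\<dots> = 2 * t / sqrt (sa * sb)" using D by (simp add: field_simps)
  also have "\<dots> \<le> eps" using t3 sa sb by (simp add: field_simps)
  finally have "\<bar>(u / s\<^sup>2) / (sqrt (v / s\<^sup>2) * sqrt (w / s\<^sup>2))\<bar> \<le> eps" unfolding e .
  moreover have "sqrt (v / s\<^sup>2) \<noteq> 0" "sqrt (w / s\<^sup>2) \<noteq> 0" using vp wp s by auto
  ultimately show ?thesis by simp
qed

lemma gs_eq: "gauss_space l l' d = PiM ({..<l} \<times> {..<l'} \<times> {..<d}) (\<lambda>_. NN)"
  unfolding gauss_space_def ..

lemma Bk_sub: "k < d \<Longrightarrow> Bk l l' k \<subseteq> {..<l} \<times> {..<l'} \<times> {..<d}"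
  unfolding Bk_def by auto

lemma Bk_disj: "disjoint_family_on (Bk l l') K"
  unfolding disjoint_family_on_def Bk_def by auto

lemma bv_eq: "i < l \<Longrightarrow> base_v l l' s \<omega> i = (\<lambda>k. lin (ca l l' i) (Bk l l' k) \<omega> / s)"
  unfolding base_v_def using base_lin by auto

lemma bv'_eq: "j < l' \<Longrightarrow> base_v' l l' s \<omega> j = (\<lambda>k. lin (cb l l' j) (Bk l l' k) \<omega> / s)"
  unfolding base_v'_def using base_lin' by auto

lemma ipd_div: "ipd d (\<lambda>k. f k / s) (\<lambda>k. g k / s) = (\<Sum>k<d. f k * g k) / s\<^sup>2"
  unfolding ipd_def by (simp add: sum_divide_distrib power2_eq_square)

lemma ca0: "2 \<le> l \<Longrightarrow> 2 \<le> l' \<Longrightarrow> ca l l' i (i, q, k) \<noteq> 0"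
proof -
  assume l: "2 \<le> l" and l': "2 \<le> l'"
  have "1 / (real l * real l') < 1 / real l'"
    using l l' by (intro divide_strict_left_mono) (auto simp: mult_pos_pos)
  then show ?thesis unfolding ca_def using l l' by simp
qed

lemma cb0: "2 \<le> l \<Longrightarrow> 2 \<le> l' \<Longrightarrow> cb l l' j (p, j, k) \<noteq> 0"
proof -
  assume l: "2 \<le> l" and l': "2 \<le> l'"
  have "1 / (real l * real l') < 1 / real l"
    using l l' by (intro divide_strict_left_mono) (auto simp: mult_pos_pos)
  then show ?thesis unfolding cb_def using l l' by simp
qed

lemma part1:
  assumes l: "2 \<le> l" and l': "2 \<le> l'" and s: "s > 0" and d: "d \<ge> 1"
  shows "AE \<omega> in gauss_space l l' d.
            (\<exists>i<l. \<exists>i'<l. i \<noteq> i' \<and>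
               ipd d (base_v l l' s \<omega> i) (base_v l l' s \<omega> i') \<noteq> 0) \<and>
            (\<exists>j<l'. \<exists>j'<l'. j \<noteq> j' \<and>
               ipd d (base_v' l l' s \<omega> j) (base_v' l l' s \<omega> j') \<noteq> 0)"
proof -
  have fin: "finite ({..<l} \<times> {..<l'} \<times> {..<d})" by simp
  have sub: "Bk l l' 0 \<subseteq> {..<l} \<times> {..<l'} \<times> {..<d}" using d by (intro Bk_sub) simp
  have mem: "(0, 0, 0) \<in> Bk l l' 0" using l l' unfolding Bk_def by auto
  have ae1: "AE \<omega> in gauss_space l l' d. lin (ca l l' 0) (Bk l l' 0) \<omega> \<noteq> 0"
    unfolding gs_eq by (rule lin_AE_nz[where c="ca l l' 0", OF fin sub mem ca0[OF l l', of 0 0 0]])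
  have ae2: "AE \<omega> in gauss_space l l' d. lin (cb l l' 0) (Bk l l' 0) \<omega> \<noteq> 0"
    unfolding gs_eq by (rule lin_AE_nz[where c="cb l l' 0", OF fin sub mem cb0[OF l l', of 0 0 0]])
  have l0: "l > 0" "l' > 0" using l l' by auto
  from ae1 ae2 show ?thesis
  proof eventually_elim
    fix \<omega>
    assume a1: "lin (ca l l' 0) (Bk l l' 0) \<omega> \<noteq> 0" and a2: "lin (cb l l' 0) (Bk l l' 0) \<omega> \<noteq> 0"
    have "\<exists>i<l. \<exists>i'<l. i \<noteq> i' \<and> ipd d (base_v l l' s \<omega> i) (base_v l l' s \<omega> i') \<noteq> 0"
    proof (rule nonorth[OF l])
      show "0 < d" using d by simp
      show "\<And>k. k < d \<Longrightarrow> (\<Sum>i<l. base_v l l' s \<omega> i k) = 0" by (rule sum_base_v[OF l0])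
      show "base_v l l' s \<omega> 0 0 \<noteq> 0" using bv_eq[of 0 l l' s \<omega>] l0 a1 s by simp
    qed
    moreover have "\<exists>j<l'. \<exists>j'<l'. j \<noteq> j' \<and> ipd d (base_v' l l' s \<omega> j) (base_v' l l' s \<omega> j') \<noteq> 0"
    proof (rule nonorth[OF l'])
      show "0 < d" using d by simp
      show "\<And>k. k < d \<Longrightarrow> (\<Sum>j<l'. base_v' l l' s \<omega> j k) = 0" by (rule sum_base_v'[OF l0])
      show "base_v' l l' s \<omega> 0 0 \<noteq> 0" using bv'_eq[of 0 l' l s \<omega>] l0 a2 s by simp
    qed
    ultimately show "(\<exists>i<l. \<exists>i'<l. i \<noteq> i' \<and> ipd d (base_v l l' s \<omega> i) (base_v l l' s \<omega> i') \<noteq> 0) \<and>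
            (\<exists>j<l'. \<exists>j'<l'. j \<noteq> j' \<and> ipd d (base_v' l l' s \<omega> j) (base_v' l l' s \<omega> j') \<noteq> 0)" ..
  qed
qed

lemma sum_Bk_const:
  assumes "\<And>p q k k'. f (p, q, k) = f (p, q, k')"
  shows "sum f (Bk l l' k) = sum f (Bk l l' 0)"
  unfolding sumB using assms by (intro sum.cong refl) blast

lemma ca_cb_zero:
  assumes "i < l" "j < l'" "l > 0" "l' > 0"
  shows "(\<Sum>x\<in>Bk l l' k. ca l l' i x * cb l l' j x) = 0"
proof -
  define u where "u p = (if p = i then 1 / real l' else 0) - 1 / (real l * real l')" for p
  define w where "w q = (if q = j then 1 / real l else 0) - 1 / (real l * real l')" for q
  have "(\<Sum>x\<in>Bk l l' k. ca l l' i x * cb l l' j x) = (\<Sum>p<l. \<Sum>q<l'. u p * w q)"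
    unfolding sumB ca_def cb_def u_def w_def by simp
  also have "\<dots> = (\<Sum>p<l. u p) * (\<Sum>q<l'. w q)" by (simp add: sum_product)
  also have "(\<Sum>p<l. u p) = 0"
    unfolding u_def using assms by (simp add: sum_subtractf)
  finally show ?thesis by simp
qed

lemma sq_pos:
  assumes "i < l" "2 \<le> l" "2 \<le> l'"
  shows "0 < (\<Sum>x\<in>Bk l l' 0. ca l l' i x * ca l l' i x)"
proof -
  have nz: "ca l l' i (i, 0, 0) \<noteq> 0" by (rule ca0[OF assms(2,3)])
  have "ca l l' i (i, 0, 0) * ca l l' i (i, 0, 0) \<le> (\<Sum>q<l'. ca l l' i (i, q, 0) * ca l l' i (i, q, 0))"
    by (rule member_le_sum[of 0 "{..<l'}" "\<lambda>q. ca l l' i (i, q, 0) * ca l l' i (i, q, 0)"])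
       (use assms in auto)
  also have "\<dots> \<le> (\<Sum>p<l. \<Sum>q<l'. ca l l' i (p, q, 0) * ca l l' i (p, q, 0))"
    by (rule member_le_sum[of i "{..<l}" "\<lambda>p. \<Sum>q<l'. ca l l' i (p, q, 0) * ca l l' i (p, q, 0)"])
       (use assms in \<open>auto intro!: sum_nonneg\<close>)
  finally have "ca l l' i (i, 0, 0) * ca l l' i (i, 0, 0) \<le> (\<Sum>x\<in>Bk l l' 0. ca l l' i x * ca l l' i x)"
    unfolding sumB .
  moreover have "0 < ca l l' i (i, 0, 0) * ca l l' i (i, 0, 0)"
    using nz by (auto simp: zero_less_mult_iff linorder_neq_iff)
  ultimately show ?thesis by linarith
qed

lemma sq_pos':
  assumes "j < l'" "2 \<le> l" "2 \<le> l'"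
  shows "0 < (\<Sum>x\<in>Bk l l' 0. cb l l' j x * cb l l' j x)"
proof -
  have nz: "cb l l' j (0, j, 0) \<noteq> 0" by (rule cb0[OF assms(2,3)])
  have "cb l l' j (0, j, 0) * cb l l' j (0, j, 0) \<le> (\<Sum>q<l'. cb l l' j (0, q, 0) * cb l l' j (0, q, 0))"
    by (rule member_le_sum[of j "{..<l'}" "\<lambda>q. cb l l' j (0, q, 0) * cb l l' j (0, q, 0)"])
       (use assms in auto)
  also have "\<dots> \<le> (\<Sum>p<l. \<Sum>q<l'. cb l l' j (p, q, 0) * cb l l' j (p, q, 0))"
    by (rule member_le_sum[of 0 "{..<l}" "\<lambda>p. \<Sum>q<l'. cb l l' j (p, q, 0) * cb l l' j (p, q, 0)"])
       (use assms in \<open>auto intro!: sum_nonneg\<close>)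
  finally have "cb l l' j (0, j, 0) * cb l l' j (0, j, 0) \<le> (\<Sum>x\<in>Bk l l' 0. cb l l' j x * cb l l' j x)"
    unfolding sumB .
  moreover have "0 < cb l l' j (0, j, 0) * cb l l' j (0, j, 0)"
    using nz by (auto simp: zero_less_mult_iff linorder_neq_iff)
  ultimately show ?thesis by linarith
qed

lemma part2_bound:
  fixes s t eps :: real
  assumes l: "2 \<le> l" and l': "2 \<le> l'" and i: "i < l" and j: "j < l'" and s: "s > 0" and d: "d > 0"
    and t: "t > 0"
  defines "sa \<equiv> (\<Sum>x\<in>Bk l l' 0. ca l l' i x * ca l l' i x)"
    and "sb \<equiv> (\<Sum>x\<in>Bk l l' 0. cb l l' j x * cb l l' j x)"
    and "SA \<equiv> (\<Sum>x\<in>Bk l l' 0. \<bar>ca l l' i x\<bar>)"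
    and "SB \<equiv> (\<Sum>x\<in>Bk l l' 0. \<bar>cb l l' j x\<bar>)"
  assumes t1: "t \<le> sa / 2" and t2: "t \<le> sb / 2" and t3: "t \<le> eps * sqrt (sa * sb) / 2"
  shows "1 - (3 * (SA ^ 4 + SB ^ 4) + 3 * (SA ^ 4 + SA ^ 4) + 3 * (SB ^ 4 + SB ^ 4)) / (real d * t\<^sup>2)
     \<le> measure (gauss_space l l' d)
                {\<omega> \<in> space (gauss_space l l' d).
                   vnorm d (base_v l l' s \<omega> i) \<noteq> 0 \<and>
                   vnorm d (base_v' l l' s \<omega> j) \<noteq> 0 \<and>
                   \<bar>ipd d (base_v l l' s \<omega> i) (base_v' l l' s \<omega> j)
                     / (vnorm d (base_v l l' s \<omega> i) * vnorm d (base_v' l l' s \<omega> j))\<bar>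
                   \<le> eps}"
proof -
  define I where "I = {..<l} \<times> {..<l'} \<times> {..<d}"
  define M where "M = PiM I (\<lambda>_. NN)"
  have gs: "gauss_space l l' d = M" unfolding M_def I_def gs_eq ..
  interpret P: prob_space M unfolding M_def by (rule PP_prob)
  have fin: "finite I" unfolding I_def by simp
  have "(0, 0, 0) \<in> I" unfolding I_def using d l l' by auto
  then have ne: "I \<noteq> {}" by auto
  have l0: "l > 0" "l' > 0" using l l' by auto
  define c1 where "c1 = ca l l' i"
  define c2 where "c2 = cb l l' j"
  define B where "B = Bk l l'"
  have BI: "\<And>k. k < d \<Longrightarrow> B k \<subseteq> I" unfolding B_def I_def by (rule Bk_sub)
  have disj: "disjoint_family_on B {..<d}" unfolding B_def by (rule Bk_disj)
  define Sab where "Sab \<omega> = (\<Sum>k<d. lin c1 (B k) \<omega> * lin c2 (B k) \<omega>)" for \<omega>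
  define Saa where "Saa \<omega> = (\<Sum>k<d. lin c1 (B k) \<omega> * lin c1 (B k) \<omega>)" for \<omega>
  define Sbb where "Sbb \<omega> = (\<Sum>k<d. lin c2 (B k) \<omega> * lin c2 (B k) \<omega>)" for \<omega>
  have lm: "lin c (B k) \<in> borel_measurable M" if "k < d" for c k
    unfolding M_def by (rule lin_meas[OF BI[OF that]])
  have mS: "(\<lambda>\<omega>. \<Sum>k<d. lin ca1 (B k) \<omega> * lin ca2 (B k) \<omega>) \<in> borel_measurable M" for ca1 ca2
  proof (rule borel_measurable_sum)
    fix k assume "k \<in> {..<d}"
    then have "k < d" by simp
    then show "(\<lambda>\<omega>. lin ca1 (B k) \<omega> * lin ca2 (B k) \<omega>) \<in> borel_measurable M"
      using lm[of k ca1] lm[of k ca2] by measurable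
  qed
  have mab[measurable]: "Sab \<in> borel_measurable M" unfolding Sab_def[abs_def] by (rule mS)
  have maa[measurable]: "Saa \<in> borel_measurable M" unfolding Saa_def[abs_def] by (rule mS)
  have mbb[measurable]: "Sbb \<in> borel_measurable M" unfolding Sbb_def[abs_def] by (rule mS)
  have e1: "vnorm d (base_v l l' s \<omega> i) = sqrt (Saa \<omega> / s\<^sup>2)" for \<omega>
    unfolding vnorm_def bv_eq[OF i] ipd_div Saa_def c1_def B_def ..
  have e2: "vnorm d (base_v' l l' s \<omega> j) = sqrt (Sbb \<omega> / s\<^sup>2)" for \<omega>
    unfolding vnorm_def bv'_eq[OF j] ipd_div Sbb_def c2_def B_def ..
  have e3: "ipd d (base_v l l' s \<omega> i) (base_v' l l' s \<omega> j) = Sab \<omega> / s\<^sup>2" for \<omega>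
    unfolding bv_eq[OF i] bv'_eq[OF j] ipd_div Sab_def c1_def c2_def B_def ..
  define E where "E = {\<omega> \<in> space M. sqrt (Saa \<omega> / s\<^sup>2) \<noteq> 0 \<and> sqrt (Sbb \<omega> / s\<^sup>2) \<noteq> 0 \<and>
         \<bar>(Sab \<omega> / s\<^sup>2) / (sqrt (Saa \<omega> / s\<^sup>2) * sqrt (Sbb \<omega> / s\<^sup>2))\<bar> \<le> eps}"
  have setE: "{\<omega> \<in> space (gauss_space l l' d).
                   vnorm d (base_v l l' s \<omega> i) \<noteq> 0 \<and>
                   vnorm d (base_v' l l' s \<omega> j) \<noteq> 0 \<and>
                   \<bar>ipd d (base_v l l' s \<omega> i) (base_v' l l' s \<omega> j)
                     / (vnorm d (base_v l l' s \<omega> i) * vnorm d (base_v' l l' s \<omega> j))\<bar>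
                   \<le> eps} = E"
    unfolding E_def gs e1 e2 e3 ..
  have Es: "E \<in> sets M" unfolding E_def by measurable
  define b1 where "b1 = {\<omega> \<in> space M. t * real d \<le> \<bar>Sab \<omega> - real d * 0\<bar>}"
  define b2 where "b2 = {\<omega> \<in> space M. t * real d \<le> \<bar>Saa \<omega> - real d * sa\<bar>}"
  define b3 where "b3 = {\<omega> \<in> space M. t * real d \<le> \<bar>Sbb \<omega> - real d * sb\<bar>}"
  have b1s: "b1 \<in> sets M" unfolding b1_def by measurable
  have b2s: "b2 \<in> sets M" unfolding b2_def by measurable
  have b3s: "b3 \<in> sets M" unfolding b3_def by measurable
  have A1: "(\<Sum>x\<in>B k. \<bar>c1 x\<bar>) = SA" for k
    unfolding SA_def B_def c1_def by (rule sum_Bk_const) (simp add: ca_def)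
  have A2: "(\<Sum>x\<in>B k. \<bar>c2 x\<bar>) = SB" for k
    unfolding SB_def B_def c2_def by (rule sum_Bk_const) (simp add: cb_def)
  have mu12: "(\<Sum>x\<in>B k. c1 x * c2 x) = 0" for k
    unfolding B_def c1_def c2_def by (rule ca_cb_zero[OF i j l0])
  have mu11: "(\<Sum>x\<in>B k. c1 x * c1 x) = sa" for k
    unfolding sa_def B_def c1_def by (rule sum_Bk_const) (simp add: ca_def)
  have mu22: "(\<Sum>x\<in>B k. c2 x * c2 x) = sb" for k
    unfolding sb_def B_def c2_def by (rule sum_Bk_const) (simp add: cb_def)
  have m1: "measure M b1 \<le> 3 * (SA ^ 4 + SB ^ 4) / (real d * t\<^sup>2)"
    unfolding b1_def Sab_def M_def by (rule block_cheb[OF fin ne d BI disj A1 A2 mu12 t])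
  have m2: "measure M b2 \<le> 3 * (SA ^ 4 + SA ^ 4) / (real d * t\<^sup>2)"
    unfolding b2_def Saa_def M_def by (rule block_cheb[OF fin ne d BI disj A1 A1 mu11 t])
  have m3: "measure M b3 \<le> 3 * (SB ^ 4 + SB ^ 4) / (real d * t\<^sup>2)"
    unfolding b3_def Sbb_def M_def by (rule block_cheb[OF fin ne d BI disj A2 A2 mu22 t])
  have sa0: "sa > 0" unfolding sa_def by (rule sq_pos[OF i l l'])
  have sb0: "sb > 0" unfolding sb_def by (rule sq_pos'[OF j l l'])
  have sub: "space M - (b1 \<union> b2 \<union> b3) \<subseteq> E"
  proof
    fix \<omega> assume \<omega>: "\<omega> \<in> space M - (b1 \<union> b2 \<union> b3)"
    then have u: "\<bar>Sab \<omega>\<bar> < t * real d" and v: "\<bar>Saa \<omega> - real d * sa\<bar> < t * real d"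
      and w: "\<bar>Sbb \<omega> - real d * sb\<bar> < t * real d"
      unfolding b1_def b2_def b3_def by auto
    have "real d > 0" using d by simp
    from good_arith[OF s this sa0 sb0 t t1 t2 t3 u v w] \<omega>
    show "\<omega> \<in> E" unfolding E_def by simp
  qed
  have U: "b1 \<union> b2 \<union> b3 \<in> sets M" using b1s b2s b3s by simp
  have "measure M (b1 \<union> b2 \<union> b3) \<le> measure M (b1 \<union> b2) + measure M b3"
    by (rule measure_Un_le) (use b1s b2s b3s in simp_all)
  also have "measure M (b1 \<union> b2) \<le> measure M b1 + measure M b2"
    by (rule measure_Un_le[OF b1s b2s])
  finally have mU: "measure M (b1 \<union> b2 \<union> b3) \<le> measure M b1 + measure M b2 + measure M b3" by simp
  have "1 - (3 * (SA ^ 4 + SB ^ 4) + 3 * (SA ^ 4 + SA ^ 4) + 3 * (SB ^ 4 + SB ^ 4)) / (real d * t\<^sup>2)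
        = 1 - (3 * (SA ^ 4 + SB ^ 4) / (real d * t\<^sup>2) + 3 * (SA ^ 4 + SA ^ 4) / (real d * t\<^sup>2)
               + 3 * (SB ^ 4 + SB ^ 4) / (real d * t\<^sup>2))"
    by (simp add: add_divide_distrib)
  also have "\<dots> \<le> 1 - measure M (b1 \<union> b2 \<union> b3)" using m1 m2 m3 mU by linarith
  also have "\<dots> = measure M (space M - (b1 \<union> b2 \<union> b3))" by (rule P.prob_compl[OF U, symmetric])
  also have "\<dots> \<le> measure M E" by (rule P.finite_measure_mono[OF sub Es])
  finally show ?thesis unfolding gs setE[unfolded gs] .
qed

theorem theorem1:
  fixes l l' :: nat and \<sigma> :: "nat \<Rightarrow> real"
  assumes "l \<ge> 2" and "l' \<ge> 2" and "\<And>d. \<sigma> d > 0"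
  shows "(\<forall>d\<ge>1. AE \<omega> in gauss_space l l' d.
            (\<exists>i<l. \<exists>i'<l. i \<noteq> i' \<and>
               ipd d (base_v l l' (\<sigma> d) \<omega> i) (base_v l l' (\<sigma> d) \<omega> i') \<noteq> 0) \<and>
            (\<exists>j<l'. \<exists>j'<l'. j \<noteq> j' \<and>
               ipd d (base_v' l l' (\<sigma> d) \<omega> j) (base_v' l l' (\<sigma> d) \<omega> j') \<noteq> 0))
       \<and> (\<forall>i<l. \<forall>j<l'. \<forall>\<epsilon>>0.
            (\<lambda>d. measure (gauss_space l l' d)
                {\<omega> \<in> space (gauss_space l l' d).
                   vnorm d (base_v l l' (\<sigma> d) \<omega> i) \<noteq> 0 \<and>
                   vnorm d (base_v' l l' (\<sigma> d) \<omega> j) \<noteq> 0 \<and>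
                   \<bar>ipd d (base_v l l' (\<sigma> d) \<omega> i) (base_v' l l' (\<sigma> d) \<omega> j)
                     / (vnorm d (base_v l l' (\<sigma> d) \<omega> i) * vnorm d (base_v' l l' (\<sigma> d) \<omega> j))\<bar>
                   \<le> \<epsilon>})
            \<longlonglongrightarrow> 1)"
proof (intro conjI allI impI)
  fix d :: nat assume "d \<ge> 1"
  then show "AE \<omega> in gauss_space l l' d.
            (\<exists>i<l. \<exists>i'<l. i \<noteq> i' \<and>
               ipd d (base_v l l' (\<sigma> d) \<omega> i) (base_v l l' (\<sigma> d) \<omega> i') \<noteq> 0) \<and>
            (\<exists>j<l'. \<exists>j'<l'. j \<noteq> j' \<and>
               ipd d (base_v' l l' (\<sigma> d) \<omega> j) (base_v' l l' (\<sigma> d) \<omega> j') \<noteq> 0)"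
    by (rule part1[OF assms(1,2) assms(3)])
next
  fix i j :: nat and \<epsilon> :: real
  assume i: "i < l" and j: "j < l'" and eps: "\<epsilon> > 0"
  define sa where "sa = (\<Sum>x\<in>Bk l l' 0. ca l l' i x * ca l l' i x)"
  define sb where "sb = (\<Sum>x\<in>Bk l l' 0. cb l l' j x * cb l l' j x)"
  define SA where "SA = (\<Sum>x\<in>Bk l l' 0. \<bar>ca l l' i x\<bar>)"
  define SB where "SB = (\<Sum>x\<in>Bk l l' 0. \<bar>cb l l' j x\<bar>)"
  define K where "K = 3 * (SA ^ 4 + SB ^ 4) + 3 * (SA ^ 4 + SA ^ 4) + 3 * (SB ^ 4 + SB ^ 4)"
  have sa0: "sa > 0" unfolding sa_def by (rule sq_pos[OF i assms(1,2)])
  have sb0: "sb > 0" unfolding sb_def by (rule sq_pos'[OF j assms(1,2)])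
  define t where "t = min (min (sa / 2) (sb / 2)) (\<epsilon> * sqrt (sa * sb) / 2)"
  have t0: "t > 0" unfolding t_def using sa0 sb0 eps by simp
  have t1: "t \<le> sa / 2" and t2: "t \<le> sb / 2" and t3: "t \<le> \<epsilon> * sqrt (sa * sb) / 2"
    unfolding t_def by auto
  let ?f = "\<lambda>d. measure (gauss_space l l' d)
                {\<omega> \<in> space (gauss_space l l' d).
                   vnorm d (base_v l l' (\<sigma> d) \<omega> i) \<noteq> 0 \<and>
                   vnorm d (base_v' l l' (\<sigma> d) \<omega> j) \<noteq> 0 \<and>
                   \<bar>ipd d (base_v l l' (\<sigma> d) \<omega> i) (base_v' l l' (\<sigma> d) \<omega> j)
                     / (vnorm d (base_v l l' (\<sigma> d) \<omega> i) * vnorm d (base_v' l l' (\<sigma> d) \<omega> j))\<bar>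
                   \<le> \<epsilon>}"
  have ev1: "eventually (\<lambda>d. 1 - (K / t\<^sup>2) / real d \<le> ?f d) sequentially"
  proof (rule eventually_sequentiallyI[of 1])
    fix d :: nat assume "1 \<le> d"
    then have d: "d > 0" by simp
    have "1 - K / (real d * t\<^sup>2) \<le> ?f d"
      unfolding K_def SA_def SB_def
      by (rule part2_bound[OF assms(1,2) i j assms(3) d t0 t1[unfolded sa_def] t2[unfolded sb_def]
            t3[unfolded sa_def sb_def]])
    moreover have "K / (real d * t\<^sup>2) = (K / t\<^sup>2) / real d" by simp
    ultimately show "1 - (K / t\<^sup>2) / real d \<le> ?f d" by simp
  qed
  have ev2: "eventually (\<lambda>d. ?f d \<le> 1) sequentially"
  proof (rule always_eventually, rule allI)
    fix d
    interpret P: prob_space "gauss_space l l' d" unfolding gs_eq by (rule PP_prob)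
    show "?f d \<le> 1" by (rule P.prob_le_1)
  qed
  have lim1: "(\<lambda>d. 1 - (K / t\<^sup>2) / real d) \<longlonglongrightarrow> 1"
    using tendsto_diff[OF tendsto_const[of "1::real"] lim_const_over_n[of "K / t\<^sup>2"]] by simp
  show "?f \<longlonglongrightarrow> 1"
    by (rule tendsto_sandwich[OF ev1 ev2 lim1 tendsto_const])
qed

end
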